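(* Fix $w>0$. For $\rho\in(-1,1)$, let $(x,y)$ be bivariate normal with mean $(0,0)$, unit variances and correlation $\rho$, and code each real $t$ by $c(t)=0$ if $t\le -w$, $1$ if $-w<t\le 0$, $2$ if $0<t\le w$, $3$ if $t>w$. Let $I_{2,\rho,w}$ be the Fisher information about $\rho$ contained in $k$ i.i.d. observations of the pair of codes $(c(x),c(y))$ (a multinomial model with the 16 cell probabilities $P_{i,j}(\rho,w)=\Pr(c(x)=i,c(y)=j)$), i.e. $I_{2,\rho,w}=k\sum_{i,j}\frac{(\partial_\rho P_{i,j}(\rho,w))^2}{P_{i,j}(\rho,w)}$. Let $$I_{1,\rho}=2k\frac{1}{4\pi^2(1-\rho^2)}\left[\frac{1}{\frac14+\frac{\arcsin\rho}{2\pi}}+\frac{1}{\frac14-\frac{\arcsin\rho}{2\pi}}\right]$$ be the Fisher information about $\rho$ in $k$ i.i.d. observations of the signs $(\mathrm{sgn}(x),\mathrm{sgn}(y))$, and let $R_{\rho,w}=I_{2,\rho,w}/I_{1,\rho}$. Then at $\rho=0$ (equivalently, in the limit $\rho\to0$) $$R_{0,w}=[g(w)]^2,\qquad g(w)=\frac12\left[\frac{\left(1-e^{-w^2/2}\right)^2}{\Phi(w)-\frac12}+\frac{e^{-w^2}}{1-\Phi(w)}\right],$$ where $\Phi$ is the standard normal cumulative distribution function.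
   Context: $\Phi(x)=\int_{-\infty}^x\frac{1}{\sqrt{2\pi}}e^{-t^2/2}\,dt$. The ratio $R_{\rho,w}$ measures the variance reduction of the maximum likelihood estimator of $\rho$ from 2-bit coded random projections relative to the 1-bit (sign) estimator. *)

theory Defs
  imports "HOL-Probability.Probability"
begin

definition Phi :: "real \<Rightarrow> real" where
  "Phi x = (LBINT t:{..x}. std_normal_density t)"

definition bvn_density :: "real \<Rightarrow> real \<times> real \<Rightarrow> real" where
  "bvn_density \<rho> p = (case p of (x, y) \<Rightarrow>
     1 / (2 * pi * sqrt (1 - \<rho>\<^sup>2)) * exp (- (x\<^sup>2 - 2 * \<rho> * x * y + y\<^sup>2) / (2 * (1 - \<rho>\<^sup>2))))"

text \<open>Coding intervals: c(t) = i iff t in code_set w i.\<close>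
definition code_set :: "real \<Rightarrow> nat \<Rightarrow> real set" where
  "code_set w i = (if i = 0 then {..-w} else if i = 1 then {-w<..0}
                   else if i = 2 then {0<..w} else {w<..})"

definition cellP :: "real \<Rightarrow> real \<Rightarrow> nat \<Rightarrow> nat \<Rightarrow> real" where
  "cellP \<rho> w i j = (LINT p|lborel. indicator (code_set w i \<times> code_set w j) p * bvn_density \<rho> p)"

definition I2 :: "nat \<Rightarrow> real \<Rightarrow> real \<Rightarrow> real" where
  "I2 k \<rho> w = real k * (\<Sum>i<4. \<Sum>j<4. (deriv (\<lambda>r. cellP r w i j) \<rho>)\<^sup>2 / cellP \<rho> w i j)"

definition I1 :: "nat \<Rightarrow> real \<Rightarrow> real" where
  "I1 k \<rho> = 2 * real k * (1 / (4 * pi\<^sup>2 * (1 - \<rho>\<^sup>2))) *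
     (1 / (1/4 + arcsin \<rho> / (2 * pi)) + 1 / (1/4 - arcsin \<rho> / (2 * pi)))"

definition R :: "nat \<Rightarrow> real \<Rightarrow> real \<Rightarrow> real" where
  "R k \<rho> w = I2 k \<rho> w / I1 k \<rho>"

definition g :: "real \<Rightarrow> real" where
  "g w = 1/2 * ((1 - exp (- w\<^sup>2 / 2))\<^sup>2 / (Phi w - 1/2) + exp (- w\<^sup>2) / (1 - Phi w))"

end

theory Submission
  imports Defs
begin


abbreviation "phi \<equiv> std_normal_density"

lemma lint_refl: "(LINT x|lborel. f x) = (LINT x|lborel. f (- x :: real))" for f :: "real \<Rightarrow> real"
  using lborel_integral_real_affine[of "-1" f 0] by simp

lemma phi_even: "phi (-x) = phi x"
  by (simp add: normal_density_def)

lemma int_ind_phi: "A \<in> sets borel \<Longrightarrow> integrable lborel (\<lambda>t. indicator A t * phi t)"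
  using integrable_real_mult_indicator[of A lborel phi] by (simp add: mult_ac)

lemma int_ind_tphi: "A \<in> sets borel \<Longrightarrow> integrable lborel (\<lambda>t. indicator A t * (t * phi t))"
proof -
  have "integrable lborel (\<lambda>t. phi t * t^1)" by (rule integrable_std_normal_moment)
  then have "integrable lborel (\<lambda>t. t * phi t)" by (simp add: mult_ac)
  moreover assume "A \<in> sets borel"
  ultimately show ?thesis
    using integrable_real_mult_indicator[of A lborel "\<lambda>t. t * phi t"] by (simp add: mult_ac)
qed

definition PP :: "real set \<Rightarrow> real" where "PP A = (LINT t|lborel. indicator A t * phi t)"
definition QQ :: "real set \<Rightarrow> real" where "QQ A = (LINT t|lborel. indicator A t * (t * phi t))"

lemma PP_add: "A \<in> sets borel \<Longrightarrow> B \<in> sets borel \<Longrightarrow> A \<inter> B = {} \<Longrightarrow> PP (A \<union> B) = PP A + PP B"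
proof -
  assume ab: "A \<in> sets borel" "B \<in> sets borel" "A \<inter> B = {}"
  have "\<And>t. indicator (A \<union> B) t * phi t = indicator A t * phi t + indicator B t * phi t"
    using ab(3) by (auto simp: indicator_def)
  then have "PP (A \<union> B) = (LINT t|lborel. indicator A t * phi t + indicator B t * phi t)"
    unfolding PP_def by (simp only:)
  also have "\<dots> = PP A + PP B"
    unfolding PP_def by (rule Bochner_Integration.integral_add[OF int_ind_phi[OF ab(1)] int_ind_phi[OF ab(2)]])
  finally show ?thesis .
qed

lemma QQ_add: "A \<in> sets borel \<Longrightarrow> B \<in> sets borel \<Longrightarrow> A \<inter> B = {} \<Longrightarrow> QQ (A \<union> B) = QQ A + QQ B"
proof -
  assume ab: "A \<in> sets borel" "B \<in> sets borel" "A \<inter> B = {}"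
  have "\<And>t. indicator (A \<union> B) t * (t * phi t) = indicator A t * (t * phi t) + indicator B t * (t * phi t)"
    using ab(3) by (auto simp: indicator_def)
  then have "QQ (A \<union> B) = (LINT t|lborel. indicator A t * (t * phi t) + indicator B t * (t * phi t))"
    unfolding QQ_def by (simp only:)
  also have "\<dots> = QQ A + QQ B"
    unfolding QQ_def by (rule Bochner_Integration.integral_add[OF int_ind_tphi[OF ab(1)] int_ind_tphi[OF ab(2)]])
  finally show ?thesis .
qed

lemma PP_UNIV: "PP UNIV = 1"
  unfolding PP_def by simp

lemma QQ_UNIV: "QQ UNIV = 0"
proof -
  have "(LINT t|lborel. phi t * t^(2*0+1)) = 0" by (rule integral_std_normal_moment_odd)
  then show ?thesis unfolding QQ_def by (simp add: mult_ac)
qed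

lemma PP_refl: "PP A = PP (uminus ` A)"
proof -
  have "PP A = (LINT t|lborel. indicator A (-t) * phi (-t))" unfolding PP_def by (rule lint_refl)
  also have "\<dots> = PP (uminus ` A)" unfolding PP_def
    by (rule Bochner_Integration.integral_cong) (auto simp: phi_even indicator_def image_iff)
  finally show ?thesis .
qed

lemma PP_AE: "A \<in> sets borel \<Longrightarrow> B \<in> sets borel \<Longrightarrow> A - {c} = B - {c} \<Longrightarrow> PP A = PP B"
  unfolding PP_def
proof (rule integral_cong_AE)
  assume "A - {c} = B - {c}"
  then have e: "\<And>x. x \<noteq> c \<Longrightarrow> (x \<in> A) = (x \<in> B)" by blast
  show "AE x in lborel. indicator A x * phi x = indicator B x * phi x"
    using AE_lborel_singleton[of c] by (rule eventually_mono) (auto simp: indicator_def e)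
qed auto

lemma QQ_AE: "A \<in> sets borel \<Longrightarrow> B \<in> sets borel \<Longrightarrow> A - {c} = B - {c} \<Longrightarrow> QQ A = QQ B"
  unfolding QQ_def
proof (rule integral_cong_AE)
  assume "A - {c} = B - {c}"
  then have e: "\<And>x. x \<noteq> c \<Longrightarrow> (x \<in> A) = (x \<in> B)" by blast
  show "AE x in lborel. indicator A x * (x * phi x) = indicator B x * (x * phi x)"
    using AE_lborel_singleton[of c] by (rule eventually_mono) (auto simp: indicator_def e)
qed auto

lemma phi_deriv: "((\<lambda>t. - phi t) has_real_derivative (t * phi t)) (at t within S)"
proof -
  have "((\<lambda>t. - (c * exp (- t\<^sup>2 / 2))) has_real_derivative t * (c * exp (- t\<^sup>2 / 2))) (at t within S)" for c
    by (auto intro!: derivative_eq_intros simp: algebra_simps)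
  from this[of "1 / sqrt (2 * pi)"] show ?thesis unfolding std_normal_density_def .
qed

lemma QQ_Icc: "a \<le> b \<Longrightarrow> QQ {a..b} = phi a - phi b"
proof -
  assume ab: "a \<le> b"
  have "integral\<^sup>L lborel (\<lambda>x. indicator {a .. b} x *\<^sub>R (x * phi x)) = (- phi b) - (- phi a)"
  proof (rule integral_FTC_atLeastAtMost[OF ab])
    show "((\<lambda>t. - phi t) has_vector_derivative x * phi x) (at x within {a..b})" for x
      using phi_deriv[of x "{a..b}"] by (simp add: has_real_derivative_iff_has_vector_derivative)
    show "continuous_on {a..b} (\<lambda>x. x * phi x)"
      unfolding std_normal_density_def by (intro continuous_intros) auto
  qed
  then show ?thesis unfolding QQ_def by simp
qed

lemma QQ_Ioc: "a \<le> b \<Longrightarrow> QQ {a<..b} = phi a - phi b"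
proof -
  assume ab: "a \<le> b"
  have "{a<..b} - {a} = {a..b} - {a}" by auto
  then have "QQ {a<..b} = QQ {a..b}" by (intro QQ_AE) auto
  then show ?thesis using QQ_Icc[OF ab] by simp
qed

lemma QQ_pos: "QQ {0<..} = phi 0"
proof -
  have "(LINT t|lborel. phi t * \<bar>t\<bar>^(2*0+1)) = sqrt (2/pi) * 2^0 * fact 0"
    by (rule integral_std_normal_moment_abs_odd)
  then have a: "(LINT t|lborel. phi t * \<bar>t\<bar>) = sqrt (2/pi)" by simp
  have "(LINT t|lborel. phi t * t^(2*0+1)) = 0" by (rule integral_std_normal_moment_odd)
  then have b: "(LINT t|lborel. phi t * t) = 0" by simp
  have i1: "integrable lborel (\<lambda>t. phi t * \<bar>t\<bar>)"
    using integrable_std_normal_moment_abs[of 1] by simp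
  have i2: "integrable lborel (\<lambda>t. phi t * t)"
    using integrable_std_normal_moment[of 1] by simp
  have "QQ {0<..} = (LINT t|lborel. (phi t * \<bar>t\<bar> + phi t * t) / 2)"
    unfolding QQ_def by (rule Bochner_Integration.integral_cong) (auto simp: indicator_def)
  also have "\<dots> = sqrt (2/pi) / 2"
    using a b i1 i2 by simp
  also have "\<dots> = phi 0"
  proof -
    have s4: "sqrt 4 = (2::real)" by (rule real_sqrt_unique) auto
    have "sqrt (2/pi) / 2 = sqrt (2/pi) / sqrt 4" by (simp only: s4)
    also have "\<dots> = sqrt (2/pi/4)" by (simp only: real_sqrt_divide)
    also have "2/pi/4 = 1/(2*pi)" by simp
    also have "sqrt (1/(2*pi)) = 1 / sqrt (2*pi)" by (simp add: real_sqrt_divide)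
    finally show ?thesis unfolding std_normal_density_def by simp
  qed
  finally show ?thesis .
qed

lemma QQ_vals:
  assumes w: "w > 0"
  shows "QQ {w<..} = phi w" "QQ {-w<..0} = phi w - phi 0" "QQ {0<..w} = phi 0 - phi w"
    "QQ {..-w} = - phi w"
proof -
  have a: "QQ {0<..} = QQ {0<..w} + QQ {w<..}"
  proof -
    have "{0<..w} \<inter> {w<..} = {}" by auto
    then show ?thesis using QQ_add[of "{0<..w}" "{w<..}"] w by (simp add: ivl_disj_un)
  qed
  show 1: "QQ {w<..} = phi w" using a QQ_pos QQ_Ioc[of 0 w] w by simp
  show 2: "QQ {-w<..0} = phi w - phi 0" using QQ_Ioc[of "-w" 0] w by (simp add: phi_even)
  show 3: "QQ {0<..w} = phi 0 - phi w" using QQ_Ioc[of 0 w] w by simp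
  have u: "UNIV = {..-w} \<union> ({-w<..0} \<union> ({0<..w} \<union> {w<..}))"
    using w by auto
  have e1: "QQ ({0<..w} \<union> {w<..}) = QQ {0<..w} + QQ {w<..}"
    by (rule QQ_add) auto
  have e2: "QQ ({-w<..0} \<union> ({0<..w} \<union> {w<..})) = QQ {-w<..0} + QQ ({0<..w} \<union> {w<..})"
    by (rule QQ_add) auto
  have e3: "QQ ({..-w} \<union> ({-w<..0} \<union> ({0<..w} \<union> {w<..}))) = QQ {..-w} + QQ ({-w<..0} \<union> ({0<..w} \<union> {w<..}))"
    by (rule QQ_add) (use w in auto)
  have "QQ UNIV = QQ {..-w} + (QQ {-w<..0} + (QQ {0<..w} + QQ {w<..}))"
    unfolding u e3 e2 e1 ..
  then show "QQ {..-w} = - phi w" using 1 2 3 QQ_UNIV by simp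
qed

lemma Phi_PP: "Phi x = PP {..x}"
  unfolding Phi_def PP_def set_lebesgue_integral_def by simp

lemma PP_vals:
  assumes w: "w > 0"
  shows "PP {w<..} = 1 - Phi w" "PP {-w<..0} = Phi w - 1/2" "PP {0<..w} = Phi w - 1/2"
    "PP {..-w} = 1 - Phi w"
proof -
  have "{0..} - {0} = {0<..} - {0::real}" by auto
  then have "PP {0..} = PP {0<..}" by (intro PP_AE) auto
  then have h0: "PP {..0} = PP {0<..}"
    using PP_refl[of "{..0}"] by simp
  have "UNIV = {..0} \<union> {0::real<..}" by auto
  moreover have "PP ({..0} \<union> {0<..}) = PP {..0} + PP {0<..}" by (rule PP_add) auto
  ultimately have "PP UNIV = PP {..0} + PP {0<..}" by simp
  then have half: "PP {..0} = 1/2" using h0 PP_UNIV by simp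
  have "PP {..w} = PP {..0} + PP {0<..w}"
  proof -
    have "{..0} \<inter> {0<..w} = {}" by auto
    then show ?thesis using PP_add[of "{..0}" "{0<..w}"] w by (simp add: ivl_disj_un)
  qed
  then show 3: "PP {0<..w} = Phi w - 1/2" using half Phi_PP by simp
  have "UNIV = {..w} \<union> {w<..}" by auto
  moreover have "PP ({..w} \<union> {w<..}) = PP {..w} + PP {w<..}" by (rule PP_add) auto
  ultimately have "PP UNIV = PP {..w} + PP {w<..}" by simp
  then show 1: "PP {w<..} = 1 - Phi w" using PP_UNIV Phi_PP by simp
  have "{w..} - {w} = {w<..} - {w}" by auto
  then have "PP {w..} = PP {w<..}" by (intro PP_AE) auto
  then show "PP {..-w} = 1 - Phi w"
    using PP_refl[of "{..-w}"] 1 by simp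
  have "PP {-w<..0} = PP {0..<w}" using PP_refl[of "{-w<..0}"] by simp
  also have "\<dots> = PP {0<..w}"
  proof -
    have "{0..<w} - {0} = {0<..<w} - {0}" by auto
    then have "PP {0..<w} = PP {0<..<w}" by (intro PP_AE) auto
    moreover have "{0<..w} - {w} = {0<..<w} - {w}" by auto
    then have "PP {0<..w} = PP {0<..<w}" by (intro PP_AE) auto
    ultimately show ?thesis by simp
  qed
  finally show "PP {-w<..0} = Phi w - 1/2" using 3 by simp
qed



lemma hq: "(E::real) * (4 * N) / (4 * D) = E * N / D" by simp

lemma d2aux: "r\<^sup>2 < (1::real) \<Longrightarrow>
     exp ((2 * r * x * y - x\<^sup>2 - y\<^sup>2) / (2 - 2 * r\<^sup>2)) *
     (2 * x * y * (2 - 2 * r\<^sup>2) + (2 * r * x * y - x\<^sup>2 - y\<^sup>2) * (4 * r)) /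
     ((2 - 2 * r\<^sup>2) * (2 - 2 * r\<^sup>2)) =
     exp ((2 * r * x * y - x\<^sup>2 - y\<^sup>2) / (2 - 2 * r\<^sup>2)) *
     (x * y * (1 - r\<^sup>2) - r * (x\<^sup>2 - 2 * r * x * y + y\<^sup>2)) /
     (1 - r\<^sup>2)\<^sup>2"
proof -
  assume "r\<^sup>2 < 1"
  then have n: "1 - r\<^sup>2 \<noteq> 0" by simp
  have e: "(2 - 2 * r\<^sup>2) * (2 - 2 * r\<^sup>2) = 4 * (1 - r\<^sup>2)\<^sup>2" by (simp add: power2_eq_square algebra_simps)
  have f: "(2 * x * y * (2 - 2 * r\<^sup>2) + (2 * r * x * y - x\<^sup>2 - y\<^sup>2) * (4 * r)) = 4 * (x * y * (1 - r\<^sup>2) - r * (x\<^sup>2 - 2 * r * x * y + y\<^sup>2))"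
    by (simp add: power2_eq_square algebra_simps)
  show ?thesis unfolding e f by (rule hq)
qed

lemma bvn_eq: "bvn_density r (x,y) = 1/(2 * pi * sqrt(1-r\<^sup>2)) * exp(-(x\<^sup>2 - 2 * r * x * y + y\<^sup>2)/(2 * (1-r\<^sup>2)))"
  by (simp add: bvn_density_def)

definition dbvn :: "real \<Rightarrow> real \<Rightarrow> real \<Rightarrow> real" where
 "dbvn r x y = bvn_density r (x,y) * (r/(1-r\<^sup>2) + (x * y * (1-r\<^sup>2) - r * (x\<^sup>2 - 2 * r * x * y + y\<^sup>2))/(1-r\<^sup>2)\<^sup>2)"

lemma bvn_deriv:
  assumes r: "\<bar>r\<bar> < 1"
  shows "((\<lambda>s. bvn_density s (x,y)) has_real_derivative dbvn r x y) (at r)"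
proof -
  have a: "1 - r\<^sup>2 > 0" using r by (simp add: abs_square_less_1)
  have d1: "((\<lambda>s. 1/(2 * pi * sqrt(1-s\<^sup>2))) has_real_derivative (1/(2 * pi * sqrt(1-r\<^sup>2))) * (r/(1-r\<^sup>2))) (at r)"
    using a
    apply (auto intro!: derivative_eq_intros)
    apply (simp add: divide_simps)
    done
  have d2: "((\<lambda>s. exp(-(x\<^sup>2 - 2 * s * x * y + y\<^sup>2)/(2 * (1-s\<^sup>2)))) has_real_derivative
      exp(-(x\<^sup>2 - 2 * r * x * y + y\<^sup>2)/(2 * (1-r\<^sup>2))) * ((x * y * (1-r\<^sup>2) - r * (x\<^sup>2 - 2 * r * x * y + y\<^sup>2))/(1-r\<^sup>2)\<^sup>2)) (at r)"
    using a
    apply (auto intro!: derivative_eq_intros)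
    apply (rule d2aux)
    apply simp
    done
  show ?thesis
    unfolding bvn_eq
    apply (rule DERIV_cong[OF DERIV_mult[OF d1 d2]])
    unfolding dbvn_def bvn_eq by (simp add: distrib_left mult_ac)
qed


lemma xy_le: "2 * \<bar>x * y\<bar> \<le> x\<^sup>2 + (y::real)\<^sup>2"
proof -
  have "0 \<le> (\<bar>x\<bar> - \<bar>y\<bar>)\<^sup>2" by simp
  then show ?thesis by (simp add: power2_eq_square algebra_simps abs_mult)
qed

lemma s_facts:
  fixes s :: real
  assumes s: "\<bar>s\<bar> \<le> 1/2"
  shows "3/4 \<le> 1 - s\<^sup>2" "1 - s\<^sup>2 \<le> 1" "1/2 \<le> sqrt (1 - s\<^sup>2)"
proof -
  have "s\<^sup>2 = \<bar>s\<bar>\<^sup>2" by simp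
  also have "\<dots> \<le> (1/2)\<^sup>2" using s by (intro power_mono) auto
  finally have "s\<^sup>2 \<le> 1/4" by (simp add: power2_eq_square)
  then show a: "3/4 \<le> 1 - s\<^sup>2" by simp
  show "1 - s\<^sup>2 \<le> 1" by simp
  have h1: "sqrt (1/4) = (1/2::real)" by (rule real_sqrt_unique) (auto simp: power2_eq_square)
  have h2: "sqrt (1/4) \<le> sqrt (1 - s\<^sup>2)" using a by (intro real_sqrt_le_mono) simp
  show "1/2 \<le> sqrt (1 - s\<^sup>2)" using h1 h2 by linarith
qed

lemma Q_bounds:
  fixes s x y :: real
  assumes s: "\<bar>s\<bar> \<le> 1/2"
  shows "(x\<^sup>2 + y\<^sup>2)/2 \<le> x\<^sup>2 - 2 * s * x * y + y\<^sup>2" "x\<^sup>2 - 2 * s * x * y + y\<^sup>2 \<le> 3/2 * (x\<^sup>2 + y\<^sup>2)"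
proof -
  have "\<bar>2 * s * x * y\<bar> = (2 * \<bar>s\<bar>) * \<bar>x * y\<bar>" by (simp add: abs_mult)
  also have "\<dots> \<le> 1 * \<bar>x * y\<bar>" using s by (intro mult_right_mono) auto
  finally have h0: "\<bar>2 * s * x * y\<bar> \<le> \<bar>x * y\<bar>" by simp
  have h1: "- \<bar>2 * s * x * y\<bar> \<le> 2 * s * x * y" "2 * s * x * y \<le> \<bar>2 * s * x * y\<bar>" by linarith+
  note h = h0 h1
  show "(x\<^sup>2 + y\<^sup>2)/2 \<le> x\<^sup>2 - 2 * s * x * y + y\<^sup>2" using h0 xy_le[of x y] by argo
  show "x\<^sup>2 - 2 * s * x * y + y\<^sup>2 \<le> 3/2 * (x\<^sup>2 + y\<^sup>2)" using h0 xy_le[of x y] by argo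
qed

lemma bvn_nonneg: "\<bar>s\<bar> < 1 \<Longrightarrow> 0 \<le> bvn_density s (x,y)"
proof -
  assume "\<bar>s\<bar> < 1"
  then have "1 - s\<^sup>2 > 0" by (simp add: abs_square_less_1)
  then show ?thesis unfolding bvn_eq by simp
qed

lemma bvn_le:
  assumes s: "\<bar>s\<bar> \<le> 1/2"
  shows "bvn_density s (x,y) \<le> exp (- x\<^sup>2 / 4) * exp (- y\<^sup>2 / 4)"
proof -
  note sf = s_facts[OF s]
  define Q where "Q = x\<^sup>2 - 2 * s * x * y + y\<^sup>2"
  have Qb: "(x\<^sup>2 + y\<^sup>2)/2 \<le> Q" unfolding Q_def by (rule Q_bounds(1)[OF s])
  have "0 \<le> (x\<^sup>2 + y\<^sup>2)/2" by simp
  then have Q0: "0 \<le> Q" using Qb by linarith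
  have c: "1/(2 * pi * sqrt(1-s\<^sup>2)) \<le> 1"
  proof -
    have "1 \<le> 2 * pi * (1/2)" using pi_gt3 by simp
    also have "\<dots> \<le> 2 * pi * sqrt(1-s\<^sup>2)" using sf(3) by (intro mult_left_mono) auto
    finally show ?thesis by simp
  qed
  have c0: "0 \<le> 1/(2 * pi * sqrt(1-s\<^sup>2))" using sf by simp
  have "Q / 2 \<le> Q / (2 * (1 - s\<^sup>2))"
    using sf Q0 by (intro divide_left_mono) auto
  then have "(x\<^sup>2 + y\<^sup>2)/4 \<le> Q / (2 * (1 - s\<^sup>2))" using Qb by linarith
  then have e: "exp (-Q/(2 * (1-s\<^sup>2))) \<le> exp (-(x\<^sup>2 + y\<^sup>2)/4)" by simp
  have "exp (-(x\<^sup>2 + y\<^sup>2)/4) = exp (- x\<^sup>2 / 4) * exp (- y\<^sup>2 / 4)"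
    by (simp add: exp_add[symmetric] diff_divide_distrib add_divide_distrib)
  then have "bvn_density s (x,y) \<le> 1 * (exp (- x\<^sup>2 / 4) * exp (- y\<^sup>2 / 4))"
    unfolding bvn_eq Q_def[symmetric] using c c0 e
    by (intro mult_mono) auto
  then show ?thesis by simp
qed

lemma dbvn_le:
  assumes s: "\<bar>s\<bar> \<le> 1/2"
  shows "\<bar>dbvn s x y\<bar> \<le> 3 * ((1 + x\<^sup>2) * exp (- x\<^sup>2 / 4)) * ((1 + y\<^sup>2) * exp (- y\<^sup>2 / 4))"
proof -
  note sf = s_facts[OF s]
  define Q where "Q = x\<^sup>2 - 2 * s * x * y + y\<^sup>2"
  define a where "a = 1 - s\<^sup>2"
  define S where "S = x\<^sup>2 + y\<^sup>2"
  have S0: "0 \<le> S" unfolding S_def by simp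
  have Qb1: "Q \<le> 3/2 * S" unfolding Q_def S_def by (rule Q_bounds(2)[OF s])
  have "(x\<^sup>2 + y\<^sup>2)/2 \<le> Q" unfolding Q_def by (rule Q_bounds(1)[OF s])
  then have "0 \<le> Q" using S0 unfolding S_def by argo
  note Qb = Qb1 this
  have a: "3/4 \<le> a" "a \<le> 1" unfolding a_def by (rule sf(1), rule sf(2))
  have apos: "0 < a" using a(1) by argo
  have sa: "\<bar>s\<bar> \<le> a" using a(1) s by argo
  have "\<bar>s / a\<bar> = \<bar>s\<bar> / a" using apos by simp
  also have "\<dots> \<le> 1" using sa apos by (simp add: divide_le_eq)
  finally have t1: "\<bar>s / a\<bar> \<le> 1" .
  have "\<bar>x * y * a - s * Q\<bar> \<le> \<bar>x * y * a\<bar> + \<bar>s * Q\<bar>" by (rule abs_triangle_ineq4)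
  also have "\<dots> = \<bar>x * y\<bar> * a + \<bar>s\<bar> * Q" using apos Qb(2) by (simp add: abs_mult)
  also have "\<dots> \<le> \<bar>x * y\<bar> * 1 + (1/2) * Q"
    using a Qb s by (intro add_mono mult_left_mono mult_right_mono) auto
  also have "\<dots> \<le> 5/4 * S" using xy_le[of x y] Qb unfolding S_def by simp
  finally have N: "\<bar>x * y * a - s * Q\<bar> \<le> 5/4 * S" .
  have a2: "9/16 \<le> a\<^sup>2"
  proof -
    have "(3/4)\<^sup>2 \<le> a\<^sup>2" using a by (intro power_mono) auto
    then show ?thesis by (simp add: power2_eq_square)
  qed
  have "\<bar>(x * y * a - s * Q) / a\<^sup>2\<bar> = \<bar>x * y * a - s * Q\<bar> / a\<^sup>2" by simp
  also have "\<dots> \<le> (5/4 * S) / (9/16)"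
    using N a2 S0 by (intro frac_le) auto
  also have "\<dots> \<le> 3 * S" using S0 by simp
  finally have t2: "\<bar>(x * y * a - s * Q) / a\<^sup>2\<bar> \<le> 3 * S" .
  have M: "\<bar>s / a + (x * y * a - s * Q) / a\<^sup>2\<bar> \<le> 1 + 3 * S"
    using t1 t2 abs_triangle_ineq[of "s/a" "(x * y * a - s * Q) / a\<^sup>2"] by argo
  have B0: "0 \<le> bvn_density s (x,y)" using s by (intro bvn_nonneg) auto
  have "\<bar>dbvn s x y\<bar> = bvn_density s (x,y) * \<bar>s / a + (x * y * a - s * Q) / a\<^sup>2\<bar>"
    unfolding dbvn_def a_def Q_def using B0 by (simp add: abs_mult)
  also have "\<dots> \<le> (exp (- x\<^sup>2 / 4) * exp (- y\<^sup>2 / 4)) * (1 + 3 * S)"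
    using bvn_le[OF s] M B0 by (intro mult_mono) auto
  also have "\<dots> \<le> (exp (- x\<^sup>2 / 4) * exp (- y\<^sup>2 / 4)) * (3 * ((1 + x\<^sup>2) * (1 + y\<^sup>2)))"
  proof (intro mult_left_mono)
    have "0 \<le> x\<^sup>2 * y\<^sup>2" by simp
    then show "1 + 3 * S \<le> 3 * ((1 + x\<^sup>2) * (1 + y\<^sup>2))" unfolding S_def by (simp add: algebra_simps)
  qed simp
  also have "\<dots> = 3 * ((1 + x\<^sup>2) * exp (- x\<^sup>2 / 4)) * ((1 + y\<^sup>2) * exp (- y\<^sup>2 / 4))"
    by (simp add: mult_ac)
  finally show ?thesis .
qed



definition hh :: "real \<Rightarrow> real" where "hh t = (1 + t\<^sup>2) * exp (- t\<^sup>2 / 4)"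

lemma nd2: "normal_density 0 (sqrt 2) t = exp (- t\<^sup>2 / 4) / sqrt (4 * pi)"
proof -
  have a: "2 * pi * (sqrt 2)\<^sup>2 = 4 * pi" by simp
  have b: "2 * (sqrt 2)\<^sup>2 = (4::real)" by simp
  show ?thesis unfolding normal_density_def a b by simp
qed

lemma hh_int: "integrable lborel hh"
proof -
  have i: "integrable lborel (\<lambda>t. normal_density 0 (sqrt 2) t * (t - 0)^k)" for k
    by (rule integrable_normal_moment) simp
  have I: "integrable lborel (\<lambda>t. sqrt (4 * pi) * (normal_density 0 (sqrt 2) t * (t - 0)^0 + normal_density 0 (sqrt 2) t * (t - 0)^2))"
    by (intro integrable_mult_right Bochner_Integration.integrable_add i)
  have "(\<lambda>t. sqrt (4 * pi) * (normal_density 0 (sqrt 2) t * (t - 0)^0 + normal_density 0 (sqrt 2) t * (t - 0)^2)) = hh"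
    by (rule ext) (unfold nd2 hh_def, simp add: algebra_simps)
  then show ?thesis using I by (simp only:)
qed

lemma hh_ge: "exp (- t\<^sup>2 / 4) \<le> hh t"
  unfolding hh_def by simp

lemma prod_int:
  fixes f g :: "real \<Rightarrow> real"
  assumes f: "integrable lborel f" and g: "integrable lborel g"
  shows "integrable lborel (\<lambda>p::real\<times>real. f (fst p) * g (snd p))"
    and "(LINT p|lborel. f (fst p) * g (snd p)) = (LINT x|lborel. f x) * (LINT y|lborel. g y)"
proof -
  have fm[measurable]: "f \<in> borel_measurable lborel" using f by auto
  have gm[measurable]: "g \<in> borel_measurable lborel" using g by auto
  have I: "integrable (lborel \<Otimes>\<^sub>M lborel) (\<lambda>p::real\<times>real. f (fst p) * g (snd p))"
  proof (rule lborel_pair.Fubini_integrable)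
    show "(\<lambda>p. f (fst p) * g (snd p)) \<in> borel_measurable (lborel \<Otimes>\<^sub>M lborel)" by measurable
    have "integrable lborel (\<lambda>x. \<bar>f x\<bar> * (LINT y|lborel. \<bar>g y\<bar>))"
      by (intro integrable_mult_left integrable_abs f)
    then show "integrable lborel (\<lambda>x. LINT y|lborel. norm (f (fst (x,y)) * g (snd (x,y))))"
      by (simp add: abs_mult)
    show "AE x in lborel. integrable lborel (\<lambda>y. f (fst (x,y)) * g (snd (x,y)))"
      using g by simp
  qed
  then show "integrable lborel (\<lambda>p::real\<times>real. f (fst p) * g (snd p))" by (simp add: lborel_prod)
  show "(LINT p|lborel. f (fst p) * g (snd p)) = (LINT x|lborel. f x) * (LINT y|lborel. g y)"
    using lborel_pair.integral_fst'[OF I] by (simp add: lborel_prod)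
qed

lemma mvt_quot:
  fixes f f' :: "real \<Rightarrow> real"
  assumes d: "\<And>z. \<bar>z\<bar> \<le> 1/2 \<Longrightarrow> (f has_real_derivative f' z) (at z)"
      and b: "\<And>z. \<bar>z\<bar> \<le> 1/2 \<Longrightarrow> \<bar>f' z\<bar> \<le> M" and r: "\<bar>r\<bar> \<le> 1/2" "r \<noteq> 0"
  shows "\<bar>(f r - f 0) / r\<bar> \<le> M"
proof (cases "r > 0")
  case True
  have "\<exists>z. 0 < z \<and> z < r \<and> f r - f 0 = (r - 0) * f' z"
  proof (rule MVT2)
    show "0 < r" by fact
    fix x assume "0 \<le> x" "x \<le> r" then show "(f has_real_derivative f' x) (at x)"
      using r by (intro d) auto
  qed
  then obtain z where z: "0 < z" "z < r" "f r - f 0 = (r - 0) * f' z" by blast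
  then have "(f r - f 0) / r = f' z" using True by simp
  moreover have "\<bar>z\<bar> \<le> 1/2" using z r by auto
  ultimately show ?thesis using b by simp
next
  case False
  then have rn: "r < 0" using r by auto
  have "\<exists>z. r < z \<and> z < 0 \<and> f 0 - f r = (0 - r) * f' z"
  proof (rule MVT2)
    show "r < 0" by fact
    fix x assume "r \<le> x" "x \<le> 0" then show "(f has_real_derivative f' x) (at x)"
      using r by (intro d) auto
  qed
  then obtain z where z: "r < z" "z < 0" "f 0 - f r = (0 - r) * f' z" by blast
  then have "(f r - f 0) / r = f' z" using rn by (simp add: field_simps)
  moreover have "\<bar>z\<bar> \<le> 1/2" using z r by auto
  ultimately show ?thesis using b by simp
qed

lemma bvn0: "bvn_density 0 (x,y) = phi x * phi y"
proof -
  have e: "exp (- (x\<^sup>2 + y\<^sup>2) / 2) = exp (- x\<^sup>2 / 2) * exp (- y\<^sup>2 / 2)"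
  proof -
    have h: "- (x\<^sup>2 + y\<^sup>2) / 2 = (- x\<^sup>2 / 2) + (- y\<^sup>2 / 2)" by (simp add: field_simps)
    show ?thesis by (simp only: h exp_add)
  qed
  have c: "1 / (2 * pi) = (1 / sqrt (2 * pi)) * (1 / sqrt (2 * pi))" by simp
  have "bvn_density 0 (x,y) = 1 / (2 * pi) * exp (- (x\<^sup>2 + y\<^sup>2) / 2)"
    unfolding bvn_eq by simp
  also have "\<dots> = ((1 / sqrt (2 * pi)) * (1 / sqrt (2 * pi))) * (exp (- x\<^sup>2 / 2) * exp (- y\<^sup>2 / 2))"
    by (simp only: e c)
  also have "\<dots> = ((1 / sqrt (2 * pi)) * exp (- x\<^sup>2 / 2)) * ((1 / sqrt (2 * pi)) * exp (- y\<^sup>2 / 2))"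
    by (simp only: mult_ac)
  finally show ?thesis unfolding std_normal_density_def .
qed

lemma dbvn0: "dbvn 0 x y = (x * phi x) * (y * phi y)"
  unfolding dbvn_def bvn0 by (simp add: mult_ac)

lemma bvn_meas[measurable]: "(\<lambda>p. bvn_density r p) \<in> borel_measurable borel"
proof -
  have "(\<lambda>p. bvn_density r p) \<in> borel_measurable (borel \<Otimes>\<^sub>M borel)"
    unfolding bvn_density_def by measurable
  then show ?thesis by (simp add: borel_prod)
qed



definition GG :: "real \<times> real \<Rightarrow> real" where "GG p = 3 * hh (fst p) * hh (snd p)"

lemma GG_int: "integrable lborel GG"
proof -
  have "integrable lborel (\<lambda>p::real\<times>real. (\<lambda>x. 3 * hh x) (fst p) * hh (snd p))"
    by (rule prod_int(1)) (use hh_int in auto)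
  then show ?thesis unfolding GG_def by simp
qed

lemma hh_nonneg: "0 \<le> hh t" unfolding hh_def by simp

lemma AB_sets: "A \<in> sets borel \<Longrightarrow> B \<in> sets borel \<Longrightarrow> A \<times> B \<in> sets (borel :: (real \<times> real) measure)"
proof -
  assume "A \<in> sets borel" "B \<in> sets borel"
  then have "A \<times> B \<in> sets (borel \<Otimes>\<^sub>M borel :: (real \<times> real) measure)" by (rule pair_measureI)
  then show ?thesis by (simp only: borel_prod)
qed

lemma cell_deriv:
  assumes A: "A \<in> sets borel" and B: "B \<in> sets borel"
  shows "((\<lambda>r. LINT p|lborel. indicator (A \<times> B) p * bvn_density r p) has_real_derivative QQ A * QQ B) (at 0)"
proof -
  define F where "F = (\<lambda>r. LINT p|lborel. indicator (A \<times> B) p * bvn_density r p)"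
  have ABm[measurable]: "A \<times> B \<in> sets (borel :: (real \<times> real) measure)" using A B by (rule AB_sets)
  have im: "(\<lambda>p. indicator (A \<times> B) p * bvn_density r p) \<in> borel_measurable lborel" for r
    by measurable
  have bnd: "\<bar>indicator (A \<times> B) p * bvn_density r p\<bar> \<le> GG p" if r: "\<bar>r\<bar> \<le> 1/2" for r p
  proof -
    obtain x y where p: "p = (x, y)" by (cases p)
    have b0: "0 \<le> bvn_density r (x,y)" using r by (intro bvn_nonneg) auto
    have "bvn_density r (x,y) \<le> exp (- x\<^sup>2 / 4) * exp (- y\<^sup>2 / 4)" by (rule bvn_le[OF r])
    also have "\<dots> \<le> hh x * hh y" by (intro mult_mono hh_ge hh_nonneg) auto
    also have "\<dots> \<le> 3 * hh x * hh y" using hh_nonneg[of x] hh_nonneg[of y] by simp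
    finally have "bvn_density r (x,y) \<le> GG p" unfolding GG_def p by simp
    then show ?thesis using b0 unfolding p by (auto simp: indicator_def)
  qed
  have Fint: "integrable lborel (\<lambda>p. indicator (A \<times> B) p * bvn_density r p)" if r: "\<bar>r\<bar> \<le> 1/2" for r
  proof (rule Bochner_Integration.integrable_bound[OF GG_int im])
    show "AE p in lborel. norm (indicator (A \<times> B) p * bvn_density r p) \<le> norm (GG p)"
      using bnd[OF r] by (auto intro!: AE_I2 simp: order_trans[OF _ abs_ge_self])
  qed
  have limval: "(LINT p|lborel. indicator (A \<times> B) p * dbvn 0 (fst p) (snd p)) = QQ A * QQ B"
  proof -
    have e: "indicator (A \<times> B) p * dbvn 0 (fst p) (snd p) =
      (\<lambda>x. indicator A x * (x * phi x)) (fst p) * (\<lambda>y. indicator B y * (y * phi y)) (snd p)" for p :: "real \<times> real"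
      unfolding dbvn0 indicator_times by (simp add: mult_ac)
    show ?thesis unfolding e QQ_def
      by (rule prod_int(2)) (use int_ind_tphi A B in auto)
  qed
  have limm: "(\<lambda>p. indicator (A \<times> B) p * dbvn 0 (fst p) (snd p)) \<in> borel_measurable lborel"
  proof -
    have e: "(\<lambda>p. indicator (A \<times> B) p * dbvn 0 (fst p) (snd p)) =
      (\<lambda>p. (\<lambda>x. indicator A x * (x * phi x)) (fst p) * (\<lambda>y. indicator B y * (y * phi y)) (snd p))"
      unfolding dbvn0 indicator_times by (simp add: mult_ac)
    have "integrable lborel (\<lambda>p::real\<times>real. (\<lambda>x. indicator A x * (x * phi x)) (fst p) * (\<lambda>y. indicator B y * (y * phi y)) (snd p))"
      by (rule prod_int(1)) (use int_ind_tphi A B in auto)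
    then show ?thesis unfolding e by auto
  qed
  have lim: "((\<lambda>r. (F r - F 0) / (r - 0)) \<longlongrightarrow> QQ A * QQ B) (at 0 within {-1/2<..<1/2})"
    unfolding tendsto_at_iff_sequentially comp_def
  proof (intro allI impI)
    fix X :: "nat \<Rightarrow> real"
    assume X: "\<forall>i. X i \<in> {-1/2<..<1/2} - {0}" and X0: "X \<longlonglongrightarrow> 0"
    have Xb: "\<bar>X i\<bar> \<le> 1/2" "X i \<noteq> 0" for i using X[rule_format, of i] by auto
    define s where "s = (\<lambda>i p. indicator (A \<times> B) p * ((bvn_density (X i) p - bvn_density 0 p) / X i))"
    have eq: "(F (X i) - F 0) / (X i - 0) = (LINT p|lborel. s i p)" for i
    proof -
      have "F (X i) - F 0 = (LINT p|lborel. indicator (A \<times> B) p * bvn_density (X i) p - indicator (A \<times> B) p * bvn_density 0 p)"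
        unfolding F_def by (rule Bochner_Integration.integral_diff[symmetric]) (use Fint Xb in auto)
      then show ?thesis unfolding s_def by (simp add: right_diff_distrib)
    qed
    have sm: "s i \<in> borel_measurable lborel" for i
      unfolding s_def by measurable
    have "(\<lambda>i. LINT p|lborel. s i p) \<longlonglongrightarrow> (LINT p|lborel. indicator (A \<times> B) p * dbvn 0 (fst p) (snd p))"
    proof (rule integral_dominated_convergence[where w=GG])
      show "(\<lambda>p. indicator (A \<times> B) p * dbvn 0 (fst p) (snd p)) \<in> borel_measurable lborel" by (rule limm)
      show "s i \<in> borel_measurable lborel" for i by (rule sm)
      show "integrable lborel GG" by (rule GG_int)
      show "AE p in lborel. (\<lambda>i. s i p) \<longlonglongrightarrow> indicator (A \<times> B) p * dbvn 0 (fst p) (snd p)"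
      proof (rule AE_I2)
        fix p :: "real \<times> real"
        obtain x y where p: "p = (x, y)" by (cases p)
        have l1: "((\<lambda>r. (bvn_density r (x,y) - bvn_density 0 (x,y)) / (r - 0)) \<longlongrightarrow> dbvn 0 x y) (at 0)"
          using bvn_deriv[of 0 x y] by (simp add: has_field_derivative_iff)
        have l2: "filterlim X (at 0) sequentially"
          using X0 Xb(2) by (auto simp: filterlim_at)
        have "(\<lambda>i. (bvn_density (X i) (x,y) - bvn_density 0 (x,y)) / (X i - 0)) \<longlonglongrightarrow> dbvn 0 x y"
          by (rule filterlim_compose[OF l1 l2])
        then show "(\<lambda>i. s i p) \<longlonglongrightarrow> indicator (A \<times> B) p * dbvn 0 (fst p) (snd p)"
          unfolding s_def p by (intro tendsto_mult_left) simp
      qed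
      show "AE p in lborel. norm (s i p) \<le> GG p" for i
      proof (rule AE_I2)
        fix p :: "real \<times> real"
        obtain x y where p: "p = (x, y)" by (cases p)
        have "\<bar>(bvn_density (X i) (x,y) - bvn_density 0 (x,y)) / X i\<bar> \<le> 3 * hh x * hh y"
        proof (rule mvt_quot[where f="\<lambda>r. bvn_density r (x,y)" and f'="\<lambda>z. dbvn z x y"])
          show "((\<lambda>r. bvn_density r (x,y)) has_real_derivative dbvn z x y) (at z)" if "\<bar>z\<bar> \<le> 1/2" for z
            using that by (intro bvn_deriv) auto
          show "\<bar>dbvn z x y\<bar> \<le> 3 * hh x * hh y" if "\<bar>z\<bar> \<le> 1/2" for z
            using dbvn_le[OF that, of x y] unfolding hh_def .
        qed (use Xb in auto)
        then show "norm (s i p) \<le> GG p"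
          unfolding s_def p GG_def by (auto simp: indicator_def hh_nonneg)
      qed
    qed
    then show "(\<lambda>i. (F (X i) - F 0) / (X i - 0)) \<longlonglongrightarrow> QQ A * QQ B"
      unfolding eq limval .
  qed
  then have "(F has_real_derivative QQ A * QQ B) (at 0 within {-1/2<..<1/2})"
    by (simp add: has_field_derivative_iff)
  then show ?thesis using at_within_open[of 0 "{-1/2<..<1/2::real}"] unfolding F_def by simp
qed

lemma cell0:
  assumes A: "A \<in> sets borel" and B: "B \<in> sets borel"
  shows "(LINT p|lborel. indicator (A \<times> B) p * bvn_density 0 p) = PP A * PP B"
proof -
  have e: "indicator (A \<times> B) p * bvn_density 0 p =
      (\<lambda>x. indicator A x * phi x) (fst p) * (\<lambda>y. indicator B y * phi y) (snd p)" for p :: "real \<times> real"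
    by (cases p) (simp add: bvn0 indicator_times mult_ac)
  show ?thesis unfolding e PP_def
    by (rule prod_int(2)) (use int_ind_phi A B in auto)
qed

lemma code_sets: "code_set w i \<in> sets borel"
  unfolding code_set_def by auto

lemma sum_sq:
  fixes q p :: "nat \<Rightarrow> real"
  shows "(\<Sum>i<4. \<Sum>j<4. (q i * q j)\<^sup>2 / (p i * p j)) = (\<Sum>i<4. (q i)\<^sup>2 / p i)\<^sup>2"
proof -
  have h: "(q i * q j)\<^sup>2 / (p i * p j) = ((q i)\<^sup>2 / p i) * ((q j)\<^sup>2 / p j)" for i j
    by (simp add: power_mult_distrib)
  have "(\<Sum>i<4. \<Sum>j<4. (q i * q j)\<^sup>2 / (p i * p j)) = (\<Sum>i<4. \<Sum>j<4. ((q i)\<^sup>2 / p i) * ((q j)\<^sup>2 / p j))"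
    by (simp only: h)
  also have "\<dots> = (\<Sum>i<4. (q i)\<^sup>2 / p i) * (\<Sum>j<4. (q j)\<^sup>2 / p j)"
    by (simp only: sum_product)
  finally show ?thesis by (simp only: power2_eq_square)
qed

lemma gen: "u = C * Y \<Longrightarrow> v = C * X \<Longrightarrow> u + v + v + u = 4 * C * (1/2 * (X + Y))" for u v C X Y :: real
  by (simp add: algebra_simps)

lemma final_alg:
  fixes k :: nat and c a P G :: real
  assumes k: "k \<ge> 1" and c: "c\<^sup>2 = 1 / (2 * pi)"
    and G: "G = 1/2 * ((1 - a)\<^sup>2 / (P - 1/2) + a\<^sup>2 / (1 - P))"
  shows "real k * ((- (c * a))\<^sup>2 / (1 - P) + (c * a - c)\<^sup>2 / (P - 1/2) + (c - c * a)\<^sup>2 / (P - 1/2) + (c * a)\<^sup>2 / (1 - P))\<^sup>2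
     / (2 * real k * (1 / (4 * pi\<^sup>2 * (1 - 0\<^sup>2))) * (1 / (1/4 + 0 / (2 * pi)) + 1 / (1/4 - 0 / (2 * pi)))) = G\<^sup>2"
proof -
  have s: "(- (c * a))\<^sup>2 / (1 - P) + (c * a - c)\<^sup>2 / (P - 1/2) + (c - c * a)\<^sup>2 / (P - 1/2) + (c * a)\<^sup>2 / (1 - P)
      = 4 * c\<^sup>2 * G"
  proof -
    have "(c * a - c)\<^sup>2 = c\<^sup>2 * (1 - a)\<^sup>2" "(c - c * a)\<^sup>2 = c\<^sup>2 * (1 - a)\<^sup>2"
      "(- (c * a))\<^sup>2 = c\<^sup>2 * a\<^sup>2" "(c * a)\<^sup>2 = c\<^sup>2 * a\<^sup>2"
      by (simp_all add: power2_eq_square algebra_simps)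
    then have "?thesis = (c\<^sup>2 * a\<^sup>2 / (1 - P) + c\<^sup>2 * (1 - a)\<^sup>2 / (P - 1/2) + c\<^sup>2 * (1 - a)\<^sup>2 / (P - 1/2) + c\<^sup>2 * a\<^sup>2 / (1 - P) = 4 * c\<^sup>2 * (1/2 * ((1 - a)\<^sup>2 / (P - 1/2) + a\<^sup>2 / (1 - P))))"
      unfolding G by (simp only:)
    also have "\<dots>"
      using gen[of "c\<^sup>2 * a\<^sup>2 / (1 - P)" "c\<^sup>2" "a\<^sup>2 / (1 - P)" "c\<^sup>2 * (1 - a)\<^sup>2 / (P - 1/2)" "(1 - a)\<^sup>2 / (P - 1/2)"]
      by simp
    finally show ?thesis by simp
  qed
  have kp: "real k > 0" using k by simp
  show ?thesis unfolding s c using kp by (simp add: field_simps power2_eq_square)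
qed


theorem theorem2:
  fixes w :: real and k :: nat
  assumes "w > 0" and "k \<ge> 1"
  shows "R k 0 w = (g w)\<^sup>2"
proof -
  note w = assms(1)
  define q where "q = (\<lambda>i. QQ (code_set w i))"
  define p where "p = (\<lambda>i. PP (code_set w i))"
  have cd: "deriv (\<lambda>r. cellP r w i j) 0 = q i * q j" for i j
    unfolding cellP_def q_def by (rule DERIV_imp_deriv[OF cell_deriv[OF code_sets code_sets]])
  have c0: "cellP 0 w i j = p i * p j" for i j
    unfolding cellP_def p_def by (rule cell0[OF code_sets code_sets])
  have I2: "I2 k 0 w = real k * (\<Sum>i<4. (q i)\<^sup>2 / p i)\<^sup>2"
    unfolding I2_def cd c0 sum_sq ..
  have sum4: "(\<Sum>i<4. f i) = f 0 + f 1 + f 2 + f 3" for f :: "nat \<Rightarrow> real"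
    by (simp add: eval_nat_numeral)
  define c where "c = 1 / sqrt (2 * pi)"
  define a where "a = exp (- w\<^sup>2 / 2)"
  have phw: "phi w = c * a" unfolding c_def a_def std_normal_density_def ..
  have ph0: "phi 0 = c" unfolding c_def std_normal_density_def by simp
  have cs: "c\<^sup>2 = 1 / (2 * pi)" unfolding c_def by (simp add: power_divide)
  have a2: "exp (- w\<^sup>2) = a\<^sup>2"
  proof -
    have "- w\<^sup>2 = - w\<^sup>2 / 2 + - w\<^sup>2 / 2" by simp
    then have "exp (- w\<^sup>2) = exp (- w\<^sup>2 / 2) * exp (- w\<^sup>2 / 2)" by (metis exp_add)
    then show ?thesis unfolding a_def by (simp add: power2_eq_square)
  qed
  have cs0: "code_set w 0 = {..-w}" "code_set w 1 = {-w<..0}" "code_set w 2 = {0<..w}" "code_set w 3 = {w<..}"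
    unfolding code_set_def by auto
  have qv: "q 0 = - (c * a)" "q 1 = c * a - c" "q 2 = c - c * a" "q 3 = c * a"
    unfolding q_def cs0 QQ_vals[OF w] phw ph0 by simp_all
  have pv: "p 0 = 1 - Phi w" "p 1 = Phi w - 1/2" "p 2 = Phi w - 1/2" "p 3 = 1 - Phi w"
    unfolding p_def cs0 PP_vals[OF w] by simp_all
  have gw: "g w = 1/2 * ((1 - a)\<^sup>2 / (Phi w - 1/2) + a\<^sup>2 / (1 - Phi w))"
    unfolding g_def a2 a_def ..
  have "R k 0 w = real k * ((- (c * a))\<^sup>2 / (1 - Phi w) + (c * a - c)\<^sup>2 / (Phi w - 1/2) + (c - c * a)\<^sup>2 / (Phi w - 1/2) + (c * a)\<^sup>2 / (1 - Phi w))\<^sup>2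
     / (2 * real k * (1 / (4 * pi\<^sup>2 * (1 - 0\<^sup>2))) * (1 / (1/4 + 0 / (2 * pi)) + 1 / (1/4 - 0 / (2 * pi))))"
    unfolding R_def I2 I1_def sum4 qv pv arcsin_0 ..
  also have "\<dots> = (g w)\<^sup>2"
    by (rule final_alg[OF assms(2) cs gw])
  finally show ?thesis .
qed


end
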